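(* Let $C$ be an ordered field. The theory $T_{\mathrm{Ham}}$ of independent dense Hamel spaces over $C$ is not strongly dependent. Consequently it is not dp-minimal and does not have finite dp-rank.
   Context: Let $C$ be an ordered field. A $2$-ordered $C$-vector space is a $C$-vector space $G$ with two total orderings $<_0,<_1$ such that $G$ is an ordered $C$-vector space with respect to each of them. Put $G_\infty=G\cup\{\infty\}$, with $G<_0\infty$ and $G<_1\infty$. A Hamel valuation on $G$ is a map $v:G\to G_\infty$ such that for all $x,y\in G$ and $\lambda\in C^{\times}$: $v(x)=\infty$ iff $x=0$; $v(x+y)\ge_0\min_0(v(x),v(y))$; $v(\lambda x)=v(x)$; if $0<_1x<_1y$ then $v(x)\ge_0 v(y)$; $v(v(x))=v(x)$ (with $v(\infty)=\infty$); and $v(x)>_1 0$. A Hamel space over $C$ is such a pair $(G,v)$. It is independent if for all $a_0,b_0,a_1,b_1\in G\cup\{\pm\infty\}$ with $a_0<_0b_0$ and $a_1<_1b_1$ there is $z\in G$ with $a_0<_0z<_0b_0$ and $a_1<_1z<_1b_1$; it is dense if for all $a<_0b$ in $G$ there is $c\in G$ with $a<_0v(c)<_0b$. The language is $\mathcal{L}_{\mathrm{Ham}}=\{0,+,(\lambda_c)_{c\in C},<_0,<_1,v,\infty\}$, a Hamel space being viewed as a structure with universe $G_\infty$, where $\lambda_c$ is scalar multiplication by $c$, and $g+\infty=\infty+g=\infty+\infty=\lambda_c(\infty)=v(\infty)=\infty$. $T_{\mathrm{Ham}}$ is the $\mathcal{L}_{\mathrm{Ham}}$-theory whose models are exactly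 the independent dense Hamel spaces over $C$ (it is complete). Strongly dependent, dp-minimal and finite dp-rank are the standard notions for NIP theories. *)

theory Defs
  imports Main
begin

text \<open>A structure: carrier G (the vector space), operations, two orders, and the
valuation v : G -> G_infty, where G_infty = G + {infty} is modelled by 'u option,
None standing for infty.\<close>

record ('u, 'c) hstruct =
  car  :: "'u set"
  add  :: "'u \<Rightarrow> 'u \<Rightarrow> 'u"
  zer  :: "'u"
  smul :: "'c \<Rightarrow> 'u \<Rightarrow> 'u"
  lt0  :: "'u \<Rightarrow> 'u \<Rightarrow> bool"
  lt1  :: "'u \<Rightarrow> 'u \<Rightarrow> bool"
  val  :: "'u \<Rightarrow> 'u option"

definition Ginf :: "('u, 'c) hstruct \<Rightarrow> 'u option set" where
  "Ginf M = Some ` car M \<union> {None}"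

definition ext_lt :: "('u \<Rightarrow> 'u \<Rightarrow> bool) \<Rightarrow> 'u option \<Rightarrow> 'u option \<Rightarrow> bool" where
  "ext_lt lt a b = (case (a, b) of
      (Some x, Some y) \<Rightarrow> lt x y
    | (Some x, None) \<Rightarrow> True
    | (None, _) \<Rightarrow> False)"

definition ext_le :: "('u \<Rightarrow> 'u \<Rightarrow> bool) \<Rightarrow> 'u option \<Rightarrow> 'u option \<Rightarrow> bool" where
  "ext_le lt a b = (ext_lt lt a b \<or> a = b)"

definition ext_min :: "('u \<Rightarrow> 'u \<Rightarrow> bool) \<Rightarrow> 'u option \<Rightarrow> 'u option \<Rightarrow> 'u option" where
  "ext_min lt a b = (if ext_le lt a b then a else b)"

definition vector_space_on ::
  "'u set \<Rightarrow> ('u \<Rightarrow> 'u \<Rightarrow> 'u) \<Rightarrow> 'u \<Rightarrow> ('c::field \<Rightarrow> 'u \<Rightarrow> 'u) \<Rightarrow> bool" where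
  "vector_space_on G ad z sm \<longleftrightarrow>
     z \<in> G \<and>
     (\<forall>x\<in>G. \<forall>y\<in>G. ad x y \<in> G) \<and>
     (\<forall>c. \<forall>x\<in>G. sm c x \<in> G) \<and>
     (\<forall>x\<in>G. \<forall>y\<in>G. \<forall>w\<in>G. ad (ad x y) w = ad x (ad y w)) \<and>
     (\<forall>x\<in>G. \<forall>y\<in>G. ad x y = ad y x) \<and>
     (\<forall>x\<in>G. ad z x = x) \<and>
     (\<forall>x\<in>G. \<exists>y\<in>G. ad x y = z) \<and>
     (\<forall>c. \<forall>x\<in>G. \<forall>y\<in>G. sm c (ad x y) = ad (sm c x) (sm c y)) \<and>
     (\<forall>c d. \<forall>x\<in>G. sm (c + d) x = ad (sm c x) (sm d x)) \<and>
     (\<forall>c d. \<forall>x\<in>G. sm (c * d) x = sm c (sm d x)) \<and>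
     (\<forall>x\<in>G. sm 1 x = x)"

definition ordered_vs_order ::
  "'u set \<Rightarrow> ('u \<Rightarrow> 'u \<Rightarrow> 'u) \<Rightarrow> 'u \<Rightarrow> ('c::linordered_field \<Rightarrow> 'u \<Rightarrow> 'u)
     \<Rightarrow> ('u \<Rightarrow> 'u \<Rightarrow> bool) \<Rightarrow> bool" where
  "ordered_vs_order G ad z sm lt \<longleftrightarrow>
     (\<forall>x\<in>G. \<not> lt x x) \<and>
     (\<forall>x\<in>G. \<forall>y\<in>G. \<forall>w\<in>G. lt x y \<and> lt y w \<longrightarrow> lt x w) \<and>
     (\<forall>x\<in>G. \<forall>y\<in>G. x \<noteq> y \<longrightarrow> lt x y \<or> lt y x) \<and>
     (\<forall>x\<in>G. \<forall>y\<in>G. \<forall>w\<in>G. lt x y \<longrightarrow> lt (ad x w) (ad y w)) \<and>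
     (\<forall>c. \<forall>x\<in>G. 0 < c \<and> lt z x \<longrightarrow> lt z (sm c x))"

definition two_ordered_vs :: "('u, 'c::linordered_field) hstruct \<Rightarrow> bool" where
  "two_ordered_vs M \<longleftrightarrow>
     vector_space_on (car M) (add M) (zer M) (smul M) \<and>
     ordered_vs_order (car M) (add M) (zer M) (smul M) (lt0 M) \<and>
     ordered_vs_order (car M) (add M) (zer M) (smul M) (lt1 M)"

definition hamel_valuation :: "('u, 'c::linordered_field) hstruct \<Rightarrow> bool" where
  "hamel_valuation M \<longleftrightarrow>
     (\<forall>x\<in>car M. val M x \<in> Ginf M) \<and>
     (\<forall>x\<in>car M. val M x = None \<longleftrightarrow> x = zer M) \<and>
     (\<forall>x\<in>car M. \<forall>y\<in>car M.
        ext_le (lt0 M) (ext_min (lt0 M) (val M x) (val M y)) (val M (add M x y))) \<and>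
     (\<forall>c. \<forall>x\<in>car M. c \<noteq> 0 \<longrightarrow> val M (smul M c x) = val M x) \<and>
     (\<forall>x\<in>car M. \<forall>y\<in>car M. lt1 M (zer M) x \<and> lt1 M x y
        \<longrightarrow> ext_le (lt0 M) (val M y) (val M x)) \<and>
     (\<forall>x\<in>car M. \<forall>g. val M x = Some g \<longrightarrow> val M g = Some g) \<and>
     (\<forall>x\<in>car M. ext_lt (lt1 M) (Some (zer M)) (val M x))"

definition hamel_space :: "('u, 'c::linordered_field) hstruct \<Rightarrow> bool" where
  "hamel_space M \<longleftrightarrow> two_ordered_vs M \<and> hamel_valuation M"

text \<open>lower bounds: None = -infty; upper bounds: None = +infty\<close>
definition above_lo :: "('u \<Rightarrow> 'u \<Rightarrow> bool) \<Rightarrow> 'u option \<Rightarrow> 'u \<Rightarrow> bool" where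
  "above_lo lt lo x = (case lo of None \<Rightarrow> True | Some a \<Rightarrow> lt a x)"

definition below_hi :: "('u \<Rightarrow> 'u \<Rightarrow> bool) \<Rightarrow> 'u option \<Rightarrow> 'u \<Rightarrow> bool" where
  "below_hi lt hi x = (case hi of None \<Rightarrow> True | Some b \<Rightarrow> lt x b)"

definition lo_lt_hi :: "('u \<Rightarrow> 'u \<Rightarrow> bool) \<Rightarrow> 'u option \<Rightarrow> 'u option \<Rightarrow> bool" where
  "lo_lt_hi lt lo hi = (case (lo, hi) of (Some a, Some b) \<Rightarrow> lt a b | _ \<Rightarrow> True)"

definition independent :: "('u, 'c) hstruct \<Rightarrow> bool" where
  "independent M \<longleftrightarrow>
     (\<forall>lo0 hi0 lo1 hi1.
        set_option lo0 \<subseteq> car M \<and> set_option hi0 \<subseteq> car M \<and>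
        set_option lo1 \<subseteq> car M \<and> set_option hi1 \<subseteq> car M \<and>
        lo_lt_hi (lt0 M) lo0 hi0 \<and> lo_lt_hi (lt1 M) lo1 hi1 \<longrightarrow>
        (\<exists>z\<in>car M. above_lo (lt0 M) lo0 z \<and> below_hi (lt0 M) hi0 z \<and>
                   above_lo (lt1 M) lo1 z \<and> below_hi (lt1 M) hi1 z))"

definition dense_hs :: "('u, 'c) hstruct \<Rightarrow> bool" where
  "dense_hs M \<longleftrightarrow>
     (\<forall>a\<in>car M. \<forall>b\<in>car M. lt0 M a b \<longrightarrow>
        (\<exists>c\<in>car M. \<exists>g. val M c = Some g \<and> lt0 M a g \<and> lt0 M g b))"

definition T_Ham_model :: "('u, 'c::linordered_field) hstruct \<Rightarrow> bool" where
  "T_Ham_model M \<longleftrightarrow> hamel_space M \<and> independent M \<and> dense_hs M"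

datatype 'c tm = Var nat | Zero | Infty | Plus "'c tm" "'c tm" | Scal 'c "'c tm" | Vl "'c tm"

datatype 'c fm = Eq "'c tm" "'c tm" | Lt0 "'c tm" "'c tm" | Lt1 "'c tm" "'c tm"
  | FNot "'c fm" | FAnd "'c fm" "'c fm" | FEx nat "'c fm"

fun evalt :: "('u, 'c) hstruct \<Rightarrow> (nat \<Rightarrow> 'u option) \<Rightarrow> 'c tm \<Rightarrow> 'u option" where
  "evalt M e (Var k) = e k"
| "evalt M e Zero = Some (zer M)"
| "evalt M e Infty = None"
| "evalt M e (Plus s t) = (case (evalt M e s, evalt M e t) of
      (Some x, Some y) \<Rightarrow> Some (add M x y) | _ \<Rightarrow> None)"
| "evalt M e (Scal c t) = map_option (smul M c) (evalt M e t)"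
| "evalt M e (Vl t) = (case evalt M e t of Some x \<Rightarrow> val M x | None \<Rightarrow> None)"

fun sat :: "('u, 'c) hstruct \<Rightarrow> (nat \<Rightarrow> 'u option) \<Rightarrow> 'c fm \<Rightarrow> bool" where
  "sat M e (Eq s t) = (evalt M e s = evalt M e t)"
| "sat M e (Lt0 s t) = ext_lt (lt0 M) (evalt M e s) (evalt M e t)"
| "sat M e (Lt1 s t) = ext_lt (lt1 M) (evalt M e s) (evalt M e t)"
| "sat M e (FNot f) = (\<not> sat M e f)"
| "sat M e (FAnd f g) = (sat M e f \<and> sat M e g)"
| "sat M e (FEx k f) = (\<exists>a\<in>Ginf M. sat M (e(k := a)) f)"

text \<open>assignment: object variable x is Var 0 (value b), parameters are Var 1, Var 2, ...\<close>
definition pinst :: "'u option \<Rightarrow> (nat \<Rightarrow> 'u option) \<Rightarrow> nat \<Rightarrow> 'u option" where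
  "pinst b a = (\<lambda>k. if k = 0 then b else a k)"

text \<open>ICT pattern of depth omega in the single variable x, consistency with the complete
theory T_Ham expressed (via compactness) as: every finite n x n part is realised in
every model of T_Ham.\<close>
definition ict_pattern_finite ::
  "('u, 'c) hstruct \<Rightarrow> (nat \<Rightarrow> 'c fm) \<Rightarrow> nat \<Rightarrow> bool" where
  "ict_pattern_finite M \<phi> n \<longleftrightarrow>
     (\<exists>a :: nat \<Rightarrow> nat \<Rightarrow> nat \<Rightarrow> 'u option.
        (\<forall>i j k. a i j k \<in> Ginf M) \<and>
        (\<forall>\<eta> :: nat \<Rightarrow> nat. (\<forall>i<n. \<eta> i < n) \<longrightarrow>
           (\<exists>b\<in>Ginf M. \<forall>i<n. \<forall>j<n. sat M (pinst b (a i j)) (\<phi> i) \<longleftrightarrow> j = \<eta> i)))"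

end

theory Submission
  imports Defs
begin

fun strip_tm :: "nat \<Rightarrow> ('c::linordered_field) tm" where
  "strip_tm 0 = Var 0"
| "strip_tm (Suc k) = Plus (strip_tm k) (Scal (-1) (Vl (strip_tm k)))"

definition phi :: "nat \<Rightarrow> ('c::linordered_field) fm" where
  "phi i = Eq (Vl (strip_tm i)) (Var 1)"

fun sumv :: "('u, 'c) hstruct \<Rightarrow> 'u list \<Rightarrow> 'u" where
  "sumv M [] = zer M"
| "sumv M (x # xs) = add M x (sumv M xs)"

lemma vsD1:
  assumes H: "vector_space_on G ad z (sm :: 'c::field \<Rightarrow> _)"
  shows "z \<in> G"
  using H[unfolded vector_space_on_def, THEN conjunct1] .

lemma vsD2:
  assumes H: "vector_space_on G ad z (sm :: 'c::field \<Rightarrow> _)" and x: "x \<in> G" and y: "y \<in> G"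
  shows "ad x y \<in> G"
proof -
  note X = H[unfolded vector_space_on_def, THEN conjunct2, THEN conjunct1]
  show ?thesis by (rule bspec[OF bspec[OF X x] y])
qed

lemma vsD3:
  assumes H: "vector_space_on G ad z (sm :: 'c::field \<Rightarrow> _)" and x: "x \<in> G"
  shows "sm c x \<in> G"
proof -
  note X = H[unfolded vector_space_on_def, THEN conjunct2, THEN conjunct2, THEN conjunct1]
  show ?thesis by (rule bspec[OF spec[OF X, of c] x])
qed

lemma vsD4:
  assumes H: "vector_space_on G ad z (sm :: 'c::field \<Rightarrow> _)" and x: "x \<in> G" and y: "y \<in> G" and w: "w \<in> G"
  shows "ad (ad x y) w = ad x (ad y w)"
proof -
  note X = H[unfolded vector_space_on_def, THEN conjunct2, THEN conjunct2, THEN conjunct2, THEN conjunct1]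
  show ?thesis by (rule bspec[OF bspec[OF bspec[OF X x] y] w])
qed

lemma vsD5:
  assumes H: "vector_space_on G ad z (sm :: 'c::field \<Rightarrow> _)" and x: "x \<in> G" and y: "y \<in> G"
  shows "ad x y = ad y x"
proof -
  note X = H[unfolded vector_space_on_def, THEN conjunct2, THEN conjunct2, THEN conjunct2, THEN conjunct2, THEN conjunct1]
  show ?thesis by (rule bspec[OF bspec[OF X x] y])
qed

lemma vsD6:
  assumes H: "vector_space_on G ad z (sm :: 'c::field \<Rightarrow> _)" and x: "x \<in> G"
  shows "ad z x = x"
proof -
  note X = H[unfolded vector_space_on_def, THEN conjunct2, THEN conjunct2, THEN conjunct2, THEN conjunct2, THEN conjunct2, THEN conjunct1]
  show ?thesis by (rule bspec[OF X x])
qed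

lemma vsD7:
  assumes H: "vector_space_on G ad z (sm :: 'c::field \<Rightarrow> _)" and x: "x \<in> G"
  shows "\<exists>y\<in>G. ad x y = z"
proof -
  note X = H[unfolded vector_space_on_def, THEN conjunct2, THEN conjunct2, THEN conjunct2, THEN conjunct2, THEN conjunct2, THEN conjunct2, THEN conjunct1]
  show ?thesis by (rule bspec[OF X x])
qed

lemma vsD8:
  assumes H: "vector_space_on G ad z (sm :: 'c::field \<Rightarrow> _)" and x: "x \<in> G"
  shows "sm (c + d) x = ad (sm c x) (sm d x)"
proof -
  note X = H[unfolded vector_space_on_def, THEN conjunct2, THEN conjunct2, THEN conjunct2, THEN conjunct2, THEN conjunct2, THEN conjunct2, THEN conjunct2, THEN conjunct2, THEN conjunct1]
  show ?thesis by (rule bspec[OF spec[OF spec[OF X, of c], of d] x])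
qed

lemma vsD9:
  assumes H: "vector_space_on G ad z (sm :: 'c::field \<Rightarrow> _)" and x: "x \<in> G"
  shows "sm 1 x = x"
proof -
  note X = H[unfolded vector_space_on_def, THEN conjunct2, THEN conjunct2, THEN conjunct2, THEN conjunct2, THEN conjunct2, THEN conjunct2, THEN conjunct2, THEN conjunct2, THEN conjunct2, THEN conjunct2]
  show ?thesis by (rule bspec[OF X x])
qed

lemma smul0:
  assumes vs: "vector_space_on G ad z (sm :: 'c::field \<Rightarrow> _)" and x: "x \<in> G"
  shows "sm 0 x = z"
proof -
  let ?w = "sm 0 x"
  have w: "?w \<in> G" using vsD3[OF vs x] .
  have ww: "ad ?w ?w = ?w" using vsD8[OF vs x, where c=0 and d=0] by simp
  obtain y where y: "y \<in> G" "ad ?w y = z" using vsD7[OF vs w] by blast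
  have "z = ad (ad ?w ?w) y" using ww y by simp
  also have "\<dots> = ad ?w (ad ?w y)" using vsD4[OF vs w w y(1)] .
  also have "\<dots> = ad ?w z" using y by simp
  also have "\<dots> = ?w" using vsD5[OF vs w vsD1[OF vs]] vsD6[OF vs w] by simp
  finally show ?thesis by simp
qed

lemma negc:
  assumes vs: "vector_space_on G ad z (sm :: 'c::field \<Rightarrow> _)" and x: "x \<in> G"
  shows "ad x (sm (-1) x) = z"
proof -
  have "ad x (sm (-1) x) = ad (sm 1 x) (sm (-1) x)" using vsD9[OF vs x] by simp
  also have "\<dots> = sm (1 + -1) x" using vsD8[OF vs x, where c=1 and d="-1"] by simp
  also have "\<dots> = z" using smul0[OF vs x] by simp
  finally show ?thesis .
qed

lemma cancel1:
  assumes vs: "vector_space_on G ad z (sm :: 'c::field \<Rightarrow> _)" and x: "x \<in> G" and r: "r \<in> G"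
  shows "ad (ad x r) (sm (-1) x) = r"
proof -
  have m: "sm (-1) x \<in> G" using vsD3[OF vs x] .
  have "ad (ad x r) (sm (-1) x) = ad (ad r x) (sm (-1) x)" using vsD5[OF vs x r] by simp
  also have "\<dots> = ad r (ad x (sm (-1) x))" using vsD4[OF vs r x m] .
  also have "\<dots> = ad r z" using negc[OF vs x] by simp
  also have "\<dots> = r" using vsD5[OF vs r vsD1[OF vs]] vsD6[OF vs r] by simp
  finally show ?thesis .
qed

lemma cancel2:
  assumes vs: "vector_space_on G ad z (sm :: 'c::field \<Rightarrow> _)" and x: "x \<in> G" and y: "y \<in> G"
  shows "ad (ad x y) (sm (-1) y) = x"
proof -
  have m: "sm (-1) y \<in> G" using vsD3[OF vs y] .
  have "ad (ad x y) (sm (-1) y) = ad x (ad y (sm (-1) y))" using vsD4[OF vs x y m] .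
  also have "\<dots> = ad x z" using negc[OF vs y] by simp
  also have "\<dots> = x" using vsD5[OF vs x vsD1[OF vs]] vsD6[OF vs x] by simp
  finally show ?thesis .
qed

lemma tham_parts:
  assumes H: "T_Ham_model (M :: ('u, 'c::linordered_field) hstruct)"
  shows "vector_space_on (car M) (add M) (zer M) (smul M)"
    "ordered_vs_order (car M) (add M) (zer M) (smul M) (lt0 M)"
    "hamel_valuation M" "independent M" "dense_hs M"
proof -
  have A: "hamel_space M" "independent M" "dense_hs M" using H unfolding T_Ham_model_def by simp_all
  have B: "two_ordered_vs M" "hamel_valuation M" using A(1) unfolding hamel_space_def by simp_all
  have C: "vector_space_on (car M) (add M) (zer M) (smul M)"
    "ordered_vs_order (car M) (add M) (zer M) (smul M) (lt0 M)"
    using B(1) unfolding two_ordered_vs_def by simp_all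
  show "vector_space_on (car M) (add M) (zer M) (smul M)"
    "ordered_vs_order (car M) (add M) (zer M) (smul M) (lt0 M)"
    "hamel_valuation M" "independent M" "dense_hs M" using A B C by -
qed

lemma hvD1:
  assumes H: "hamel_valuation M" and x: "x \<in> car M"
  shows "val M x \<in> Ginf M"
proof -
  note X = H[unfolded hamel_valuation_def, THEN conjunct1]
  show ?thesis by (rule bspec[OF X x])
qed

lemma hvD2:
  assumes H: "hamel_valuation M" and x: "x \<in> car M"
  shows "val M x = None \<longleftrightarrow> x = zer M"
proof -
  note X = H[unfolded hamel_valuation_def, THEN conjunct2, THEN conjunct1]
  show ?thesis by (rule bspec[OF X x])
qed

lemma hvD3:
  assumes H: "hamel_valuation M" and x: "x \<in> car M" and y: "y \<in> car M"
  shows "ext_le (lt0 M) (ext_min (lt0 M) (val M x) (val M y)) (val M (add M x y))"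
proof -
  note X = H[unfolded hamel_valuation_def, THEN conjunct2, THEN conjunct2, THEN conjunct1]
  show ?thesis by (rule bspec[OF bspec[OF X x] y])
qed

lemma hvD4:
  assumes H: "hamel_valuation M" and x: "x \<in> car M" and c: "c \<noteq> 0"
  shows "val M (smul M c x) = val M x"
proof -
  note X = H[unfolded hamel_valuation_def, THEN conjunct2, THEN conjunct2, THEN conjunct2, THEN conjunct1]
  show ?thesis by (rule mp[OF bspec[OF spec[OF X, of c] x] c])
qed

lemma hvD6:
  assumes H: "hamel_valuation M" and x: "x \<in> car M" and g: "val M x = Some g"
  shows "val M g = Some g"
proof -
  note X = H[unfolded hamel_valuation_def, THEN conjunct2, THEN conjunct2, THEN conjunct2, THEN conjunct2, THEN conjunct2, THEN conjunct1]
  show ?thesis by (rule mp[OF spec[OF bspec[OF X x], of g] g])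
qed

lemma odD1:
  assumes H: "ordered_vs_order G ad z sm lt" and x: "x \<in> G"
  shows "\<not> lt x x"
proof -
  note X = H[unfolded ordered_vs_order_def, THEN conjunct1]
  show ?thesis by (rule bspec[OF X x])
qed

lemma odD2:
  assumes H: "ordered_vs_order G ad z sm lt" and x: "x \<in> G" and y: "y \<in> G" and w: "w \<in> G" and a: "lt x y" and b: "lt y w"
  shows "lt x w"
proof -
  note X = H[unfolded ordered_vs_order_def, THEN conjunct2, THEN conjunct1]
  show ?thesis by (rule mp[OF bspec[OF bspec[OF bspec[OF X x] y] w] conjI[OF a b]])
qed

lemma val_dom:
  assumes TM: "T_Ham_model (M :: ('u, 'c::linordered_field) hstruct)"
    and x: "x \<in> car M" and y: "y \<in> car M" and vx: "val M x = Some a"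
    and lt: "ext_lt (lt0 M) (Some a) (val M y)"
  shows "val M (add M x y) = Some a"
proof -
  note vs = tham_parts(1)[OF TM]
  note od = tham_parts(2)[OF TM]
  note hv = tham_parts(3)[OF TM]
  have irr: "\<And>u. u \<in> car M \<Longrightarrow> \<not> lt0 M u u" using odD1[OF od] by blast
  have tr: "\<And>u w t. u \<in> car M \<Longrightarrow> w \<in> car M \<Longrightarrow> t \<in> car M \<Longrightarrow> lt0 M u w \<Longrightarrow> lt0 M w t \<Longrightarrow> lt0 M u t"
    using odD2[OF od] by blast
  have Gi: "\<And>u. u \<in> car M \<Longrightarrow> val M u \<in> Ginf M" using hvD1[OF hv] by blast
  have a: "a \<in> car M" using Gi[OF x] vx by (auto simp: Ginf_def)
  let ?s = "add M x y"
  have s: "?s \<in> car M" using vsD2[OF vs x y] .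
  have my: "smul M (-1) y \<in> car M" using vsD3[OF vs y] .
  have vmy: "val M (smul M (-1) y) = val M y" using hvD4[OF hv y] by simp
  have ultra: "\<And>u w. u \<in> car M \<Longrightarrow> w \<in> car M \<Longrightarrow>
      ext_le (lt0 M) (ext_min (lt0 M) (val M u) (val M w)) (val M (add M u w))"
    using hvD3[OF hv] by blast
  have "ext_le (lt0 M) (ext_min (lt0 M) (val M x) (val M y)) (val M ?s)" using ultra x y by blast
  then have h1: "ext_le (lt0 M) (Some a) (val M ?s)" using vx lt by (simp add: ext_min_def ext_le_def)
  have "ext_le (lt0 M) (ext_min (lt0 M) (val M ?s) (val M (smul M (-1) y))) (val M (add M ?s (smul M (-1) y)))"
    using ultra s my by blast
  then have h2: "ext_le (lt0 M) (ext_min (lt0 M) (val M ?s) (val M y)) (Some a)"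
    using cancel2[OF vs x y] vmy vx by simp
  have vy: "val M y \<in> Ginf M" using Gi y by blast
  have vs': "val M ?s \<in> Ginf M" using Gi s by blast
  show ?thesis
  proof (rule ccontr)
    assume ne: "val M ?s \<noteq> Some a"
    have gs: "ext_lt (lt0 M) (Some a) (val M ?s)" using h1 ne by (simp add: ext_le_def)
    have bigger: "\<And>m. m \<in> Ginf M \<Longrightarrow> ext_lt (lt0 M) (Some a) m \<Longrightarrow> \<not> ext_le (lt0 M) m (Some a)"
    proof -
      fix m assume m: "m \<in> Ginf M" and l: "ext_lt (lt0 M) (Some a) m"
      show "\<not> ext_le (lt0 M) m (Some a)"
      proof (cases m)
        case None then show ?thesis by (simp add: ext_le_def ext_lt_def)
      next
        case (Some c)
        then have c: "c \<in> car M" using m by (auto simp: Ginf_def)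
        have "lt0 M a c" using l Some by (simp add: ext_lt_def)
        then show ?thesis using Some irr tr[OF a c a] irr[OF a] by (auto simp: ext_le_def ext_lt_def)
      qed
    qed
    have "ext_min (lt0 M) (val M ?s) (val M y) \<in> Ginf M \<and>
          ext_lt (lt0 M) (Some a) (ext_min (lt0 M) (val M ?s) (val M y))"
      using gs lt vy vs' by (simp add: ext_min_def)
    then show False using bigger h2 by blast
  qed
qed

lemma exists_seq:
  assumes TM: "T_Ham_model (M :: ('u, 'c::linordered_field) hstruct)"
  shows "\<exists>g :: nat \<Rightarrow> 'u. (\<forall>k. g k \<in> car M \<and> val M (g k) = Some (g k)) \<and> (\<forall>m k. m < k \<longrightarrow> lt0 M (g m) (g k))"
proof -
  note vs = tham_parts(1)[OF TM]
  note od = tham_parts(2)[OF TM]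
  note hv = tham_parts(3)[OF TM]
  have z0: "zer M \<in> car M" using vsD1[OF vs] .
  have "\<exists>z\<in>car M. above_lo (lt0 M) (Some (zer M)) z \<and> below_hi (lt0 M) None z \<and>
                   above_lo (lt1 M) None z \<and> below_hi (lt1 M) None z"
    using tham_parts(4)[OF TM] z0 unfolding independent_def
    by (elim allE[of _ "Some (zer M)"] allE[of _ None]) (auto simp: lo_lt_hi_def)
  then obtain z where z: "z \<in> car M" "lt0 M (zer M) z" by (auto simp: above_lo_def)
  define P where "P = (\<lambda>a \<gamma>. \<gamma> \<in> car M \<and> val M \<gamma> = Some \<gamma> \<and> lt0 M a \<gamma> \<and> lt0 M \<gamma> z)"
  have exP: "\<exists>\<gamma>. P a \<gamma>" if a: "a \<in> car M" "lt0 M a z" for a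
  proof -
    obtain c g where c: "c \<in> car M" "val M c = Some g" "lt0 M a g" "lt0 M g z"
      using tham_parts(5)[OF TM] a z unfolding dense_hs_def by blast
    have "g \<in> car M" using hvD1[OF hv c(1)] c(2) by (auto simp: Ginf_def)
    moreover have "val M g = Some g" using hvD6[OF hv c(1) c(2)] .
    ultimately show ?thesis using c unfolding P_def by blast
  qed
  define g where "g = rec_nat (SOME \<gamma>. P (zer M) \<gamma>) (\<lambda>_ a. SOME \<gamma>. P a \<gamma>)"
  have g0: "g 0 = (SOME \<gamma>. P (zer M) \<gamma>)" and gS: "\<And>k. g (Suc k) = (SOME \<gamma>. P (g k) \<gamma>)"
    unfolding g_def by simp_all
  have inv: "P (if k = 0 then zer M else g (k - 1)) (g k)" for k
  proof (induction k)
    case 0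
    show ?case using someI_ex[OF exP[OF z0 z(2)]] g0 by simp
  next
    case (Suc k)
    have "g k \<in> car M" "lt0 M (g k) z" using Suc unfolding P_def by auto
    then show ?case using someI_ex[OF exP] gS[of k] by simp
  qed
  have gc: "g k \<in> car M \<and> val M (g k) = Some (g k)" for k using inv[of k] unfolding P_def by auto
  have step: "lt0 M (g k) (g (Suc k))" for k using inv[of "Suc k"] unfolding P_def by auto
  have mono: "m < k \<Longrightarrow> lt0 M (g m) (g k)" for m k
  proof (induction k)
    case 0 thus ?case by simp
  next
    case (Suc k)
    show ?case
    proof (cases "m = k")
      case True thus ?thesis using step[of k] by simp
    next
      case False
      with Suc.prems have "m < k" by simp
      with Suc.IH have h: "lt0 M (g m) (g k)" by blast
      show ?thesis by (rule odD2[OF od conjunct1[OF gc[of m]] conjunct1[OF gc[of k]] conjunct1[OF gc[of "Suc k"]] h step[of k]])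
    qed
  qed
  have A: "\<forall>k. g k \<in> car M \<and> val M (g k) = Some (g k)" by (intro allI) (rule gc)
  have B: "\<forall>m k. m < k \<longrightarrow> lt0 M (g m) (g k)" by (intro allI impI) (rule mono)
  show ?thesis
    apply (rule exI[where x=g])
    apply (rule conjI)
     apply (rule A)
    apply (rule B)
    done
qed

lemma listval:
  assumes TM: "T_Ham_model (M :: ('u, 'c::linordered_field) hstruct)"
  shows "(\<forall>x\<in>set L. x \<in> car M \<and> val M x = Some x) \<Longrightarrow> sorted_wrt (lt0 M) L \<Longrightarrow>
     sumv M L \<in> car M \<and> val M (sumv M L) = (case L of [] \<Rightarrow> None | x # _ \<Rightarrow> Some x)"
proof (induction L)
  case Nil
  have "zer M \<in> car M" using vsD1[OF tham_parts(1)[OF TM]] .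
  moreover have "val M (zer M) = None" using hvD2[OF tham_parts(3)[OF TM] calculation] by simp
  ultimately show ?case by simp
next
  case (Cons x xs)
  have x: "x \<in> car M" "val M x = Some x" using Cons.prems(1) by auto
  have IH: "sumv M xs \<in> car M \<and> val M (sumv M xs) = (case xs of [] \<Rightarrow> None | x # _ \<Rightarrow> Some x)"
    using Cons.IH Cons.prems by auto
  have lt: "ext_lt (lt0 M) (Some x) (val M (sumv M xs))"
  proof (cases xs)
    case Nil then show ?thesis using IH by (simp add: ext_lt_def)
  next
    case (Cons y ys)
    then have "lt0 M x y" using Cons.prems(2) \<open>xs = y # ys\<close> by simp
    then show ?thesis using IH Cons by (simp add: ext_lt_def)
  qed
  have "add M x (sumv M xs) \<in> car M" using vsD2[OF tham_parts(1)[OF TM] x(1) conjunct1[OF IH]] .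
  moreover have "val M (add M x (sumv M xs)) = Some x"
    using val_dom[OF TM x(1) conjunct1[OF IH] x(2) lt] .
  ultimately show ?case by simp
qed

lemma evalt_strip:
  assumes TM: "T_Ham_model (M :: ('u, 'c::linordered_field) hstruct)"
    and hL: "\<forall>x\<in>set L. x \<in> car M \<and> val M x = Some x" and sL: "sorted_wrt (lt0 M) L"
    and e0: "e 0 = Some (sumv M L)"
  shows "i \<le> length L \<Longrightarrow> evalt M e (strip_tm i :: 'c tm) = Some (sumv M (drop i L))"
proof (induction i)
  case 0 then show ?case using e0 by simp
next
  case (Suc i)
  then have il: "i < length L" by simp
  have dr: "drop i L = L ! i # drop (Suc i) L" using il by (simp add: Cons_nth_drop_Suc)
  have li: "L ! i \<in> car M" using hL il by (simp add: nth_mem)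
  have hd: "\<forall>x\<in>set (drop i L). x \<in> car M \<and> val M x = Some x" using hL by (meson in_set_dropD)
  have hd2: "\<forall>x\<in>set (drop (Suc i) L). x \<in> car M \<and> val M x = Some x" using hL by (meson in_set_dropD)
  have v: "val M (sumv M (drop i L)) = Some (L ! i)"
    using listval[OF TM hd sorted_wrt_drop[OF sL]] dr by simp
  have r: "sumv M (drop (Suc i) L) \<in> car M"
    using listval[OF TM hd2 sorted_wrt_drop[OF sL]] by simp
  have IH: "evalt M e (strip_tm i :: 'c tm) = Some (sumv M (drop i L))" using Suc il by simp
  have "evalt M e (strip_tm (Suc i) :: 'c tm) = Some (add M (sumv M (drop i L)) (smul M (-1) (L ! i)))"
    using IH v by simp
  also have "\<dots> = Some (sumv M (drop (Suc i) L))"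
    using cancel1[OF tham_parts(1)[OF TM] li r] dr by simp
  finally show ?case .
qed

theorem theorem7p1:
  shows "\<exists>\<phi> :: nat \<Rightarrow> ('c::linordered_field) fm.
           \<forall>M :: ('u, 'c) hstruct. T_Ham_model M \<longrightarrow> (\<forall>n. ict_pattern_finite M \<phi> n)"
proof (intro exI[where x=phi] allI impI)
  fix M :: "('u, 'c) hstruct" and n :: nat
  assume TM: "T_Ham_model M"
  obtain g :: "nat \<Rightarrow> 'u" where gc: "\<forall>k. g k \<in> car M \<and> val M (g k) = Some (g k)"
    and gm: "\<forall>m k. m < k \<longrightarrow> lt0 M (g m) (g k)"
    using exists_seq[OF TM] by (elim exE conjE)
  note od = tham_parts(2)[OF TM]
  have irr: "\<not> lt0 M (g m) (g m)" for m using odD1[OF od] gc by simp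
  have ginj: "m = k" if "g m = g k" for m k
  proof (rule ccontr)
    assume "m \<noteq> k"
    then consider "m < k" | "k < m" by linarith
    then show False
    proof cases
      case 1
      then have "lt0 M (g m) (g k)" using gm by simp
      then show False using that irr[of m] by simp
    next
      case 2
      then have "lt0 M (g k) (g m)" using gm by simp
      then show False using that irr[of m] by simp
    qed
  qed
  show "ict_pattern_finite M phi n" unfolding ict_pattern_finite_def
  proof (intro exI[where x="\<lambda>i j k. Some (g (i*n+j))"] conjI allI impI)
    fix i j k
    show "Some (g (i*n+j)) \<in> Ginf M" using gc by (simp add: Ginf_def)
  next
    fix \<eta> :: "nat \<Rightarrow> nat"
    assume \<eta>: "\<forall>i<n. \<eta> i < n"
    define L where "L = map (\<lambda>i. g (i*n + \<eta> i)) [0..<n]"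
    have lenL: "length L = n" unfolding L_def by simp
    have Li: "L ! i = g (i*n + \<eta> i)" if "i < n" for i using that unfolding L_def by simp
    have hL: "\<forall>x\<in>set L. x \<in> car M \<and> val M x = Some x" unfolding L_def using gc by auto
    have idx: "i*n + \<eta> i < j*n + \<eta> j" if "i < j" "j < n" for i j
    proof -
      have "\<eta> i < n" using \<eta> that by auto
      then have "i*n + \<eta> i < Suc i * n" by simp
      also have "Suc i * n \<le> j * n" using that by (intro mult_le_mono1) simp
      finally show ?thesis by simp
    qed
    have sL: "sorted_wrt (lt0 M) L"
      unfolding sorted_wrt_iff_nth_less lenL
    proof (intro allI impI)
      fix i j assume ij: "i < j" "j < n"
      then show "lt0 M (L ! i) (L ! j)" using Li[of i] Li[of j] gm idx[OF ij] by simp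
    qed
    have sc: "sumv M L \<in> car M" using listval[OF TM hL sL] by simp
    show "\<exists>b\<in>Ginf M. \<forall>i<n. \<forall>j<n. sat M (pinst b (\<lambda>k. Some (g (i*n+j)))) (phi i) \<longleftrightarrow> j = \<eta> i"
    proof (rule bexI[where x="Some (sumv M L)"])
      show "Some (sumv M L) \<in> Ginf M" using sc by (simp add: Ginf_def)
      show "\<forall>i<n. \<forall>j<n. sat M (pinst (Some (sumv M L)) (\<lambda>k. Some (g (i*n+j)))) (phi i) \<longleftrightarrow> j = \<eta> i"
      proof (intro allI impI)
        fix i j assume i: "i < n" and j: "j < n"
        let ?e = "pinst (Some (sumv M L)) (\<lambda>k. Some (g (i*n+j)))"
        have ev: "evalt M ?e (strip_tm i :: 'c tm) = Some (sumv M (drop i L))"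
          using evalt_strip[OF TM hL sL, of ?e i] i lenL by (simp add: pinst_def)
        have hd: "\<forall>x\<in>set (drop i L). x \<in> car M \<and> val M x = Some x" using hL by (meson in_set_dropD)
        have dr: "drop i L = L ! i # drop (Suc i) L" using i lenL by (simp add: Cons_nth_drop_Suc)
        have v: "val M (sumv M (drop i L)) = Some (L ! i)"
          using listval[OF TM hd sorted_wrt_drop[OF sL]] dr by simp
        have "sat M ?e (phi i) \<longleftrightarrow> g (i*n + \<eta> i) = g (i*n+j)"
          using ev v Li[OF i] by (simp add: phi_def pinst_def)
        also have "\<dots> \<longleftrightarrow> j = \<eta> i"
        proof
          assume "g (i*n + \<eta> i) = g (i*n+j)"
          then have "i*n + \<eta> i = i*n+j" by (rule ginj)
          then show "j = \<eta> i" by simp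
        qed simp
        finally show "sat M ?e (phi i) \<longleftrightarrow> j = \<eta> i" .
      qed
    qed
  qed
qed

end
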